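(* Let $\mathcal{R}$ be an MSR system satisfying the protocol format assumptions of the context, let $\mathcal{R}_{\mathsf{intf}}$ be its interface model, and let $\mathcal{R}^{\mathsf{role}}_i$ and $\mathcal{R}^e_{\mathsf{env}}$ be the role and environment components obtained by splitting the I/O rules (as in the context). For a fresh name $\mathit{rid}$, let $\mathcal{R}^{\mathsf{role}}_i(\mathit{rid})$ be $\mathcal{R}^{\mathsf{role}}_i$ with the thread identifier fixed to $\mathit{rid}$. Let $\Lambda = \bigcup_i\{a\theta \mid \exists l,r.\ l\xrightarrow{a} r\in\mathcal{R}^i_{\mathsf{io}},\ \mathrm{range}(\theta)\subseteq\mathcal{M}\}$ be the set of all ground instances of synchronization labels. Then $$\mathrm{Tr}\Big(\big(|||_{i,\mathit{rid}}\ \mathcal{R}^{\mathsf{role}}_i(\mathit{rid})\big)\ \|_{\Lambda}\ \mathcal{R}^e_{\mathsf{env}}\Big)\subseteq \mathrm{Tr}(\mathcal{R}_{\mathsf{intf}}).$$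
   Context: Terms and messages. Fix a finite signature $\Sigma$ of function symbols, a set of names $\mathcal{N} = \mathit{fresh} \cup \mathit{pub}$ and a set of variables $\mathcal{V}$; terms are $\mathcal{T} = \mathcal{T}_\Sigma(\mathcal{N}\cup\mathcal{V})$, messages $\mathcal{M}$ are ground terms, and an equational theory $\mathsf{E}$ induces $=_\mathsf{E}$. Facts and MSR. A fact signature $\Sigma_{\mathsf{facts}} = \Sigma_{\mathsf{lin}} \uplus \Sigma_{\mathsf{per}}$ is partitioned into linear and persistent symbols; facts $F(t_1,\dots,t_k)$ are partitioned accordingly into $\mathcal{F}_{\mathsf{lin}}\uplus\mathcal{F}_{\mathsf{per}}$. An MSR rule $l \xrightarrow{a} r$ has multisets of facts $l,a,r$. An MSR system induces an LTS whose states are multisets of ground facts, initial state empty, with transition $S \xrightarrow{a'} (S \setminus^{\#} (l' \cap^{\#} \mathcal{F}_{\mathsf{lin}})) \cup^{\#} r'$ whenever $l \xrightarrow{a} r$ is a rule, $\theta$ a ground instantiation of its variables, $l' \xrightarrow{a'} r' =_\mathsf{E} (l\xrightarrow{a} r)\theta$, $l' \cap^{\#} \mathcal{F}_{\mathsf{lin}} \subseteq^{\#} S$ and $\mathrm{set}(l') \cap \mathcal{F}_{\mathsf{per}} \subseteq \mathrm{set}(S)$ (multiset operations). For an LTS $X$, $\mathrm{Tr}(X)$ is the set of label sequences of finite executions from the initial state. Reserved symbols: $\mathsf{K}\in\Sigma_{\mathsf{per}}$ and $\mathsf{Fr},\mathsf{in},\mathsf{out}\in\Sigma_{\mathsf{lin}}$.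 Format assumptions. $\Sigma_{\mathsf{facts}} = \Sigma_{\mathsf{act}} \uplus \Sigma_{\mathsf{env}} \uplus \biguplus_{1\le i\le n} \Sigma^i_{\mathsf{state}}$. $\Sigma_{\mathsf{env}}$ contains disjoint subsets $\Sigma_{\mathsf{in}},\Sigma_{\mathsf{out}}$ with $\mathsf{Fr},\mathsf{in}\in\Sigma_{\mathsf{in}}$, $\mathsf{out}\in\Sigma_{\mathsf{out}}$, $\mathsf{K}\in\Sigma_{\mathsf{env}}\setminus(\Sigma_{\mathsf{in}}\cup\Sigma_{\mathsf{out}})$, and a setup symbol $\mathsf{Setup}_i\in\Sigma_{\mathsf{in}}$ for each role $i$. $\mathcal{R} = \mathcal{R}_{\mathsf{env}} \uplus \biguplus_{i}\mathcal{R}_i$, where $\mathcal{R}_{\mathsf{env}}$ contains the attacker message deduction rules and the freshness rule. All rule labels use only symbols of $\Sigma_{\mathsf{act}}$. Rules of $\mathcal{R}_{\mathsf{env}}$ use only $\Sigma_{\mathsf{env}}$ symbols in premises and conclusions; a rule producing $\mathsf{Setup}_i$ lies in $\mathcal{R}_{\mathsf{env}}$, produces nothing else and has empty label (a role setup rule). Each rule $l\xrightarrow{a} r\in\mathcal{R}_i$ has premise symbols in $\Sigma^i_{\mathsf{state}}\cup\Sigma_{\mathsf{in}}$, conclusion symbols in $\Sigma^i_{\mathsf{state}}\cup\Sigma_{\mathsf{out}}$, at least one state fact in $r$, and for some $k_i\ge1$ the first $k_i$ arguments of all its state and $\mathsf{Setup}_i$ facts coincide, the first one being a thread identifier $\mathit{rid}$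 of fresh type. Interface model. $\Sigma_{\mathsf{in}}^- = \Sigma_{\mathsf{in}}\setminus\{\mathsf{Setup}_i\}_i$. For $F\in\Sigma^-_{\mathsf{in}}\cup\Sigma_{\mathsf{out}}$ and role $i$ add a buffer symbol $F_i$; let $\Sigma^i_{\mathsf{role}} = \Sigma^i_{\mathsf{state}}\cup\{F_i\}$. $\mathcal{R}'_i$ replaces in rules of $\mathcal{R}_i$ each $F(\bar t)$ with $F\in\Sigma^-_{\mathsf{in}}\cup\Sigma_{\mathsf{out}}$ by $F_i(\mathit{rid},\bar t)$. $\mathcal{R}_{\mathsf{io}}$ contains, for each role $i$, $[F(\bar x)]\xrightarrow{[]}[F_i(\mathit{rid},\bar x)]$ for $F\in\Sigma^-_{\mathsf{in}}$, $[G_i(\mathit{rid},\bar x)]\xrightarrow{[]}[G(\bar x)]$ for $G\in\Sigma_{\mathsf{out}}$, and the role setup rules (removed from $\mathcal{R}_{\mathsf{env}}$, leaving $\mathcal{R}^-_{\mathsf{env}}$). $\mathcal{R}_{\mathsf{intf}} = \mathcal{R}^-_{\mathsf{env}}\uplus\mathcal{R}_{\mathsf{io}}\uplus\biguplus_i\mathcal{R}'_i$. Decomposition. Each I/O rule $\rho$ of role $i$ with variables $\bar y$ (including $\mathit{rid}$) gets a fresh action symbol $\lambda_\rho$ (the synchronization label $\lambda_\rho(\bar y)$), and is split into a role part (in $\mathcal{R}^i_{\mathsf{io}}$) and an environment part (in $\mathcal{R}^e_{\mathsf{io}}$): for the input rule of $F$, role part $[]\xrightarrow{[\lambda_\rho(\bar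 y)]}[F_i(\mathit{rid},\bar x)]$ and environment part $[F(\bar x)]\xrightarrow{[\lambda_\rho(\bar y)]}[]$; for the output rule of $G$, role part $[G_i(\mathit{rid},\bar x)]\xrightarrow{[\lambda_\rho(\bar y)]}[]$ and environment part $[]\xrightarrow{[\lambda_\rho(\bar y)]}[G(\bar x)]$; for a setup rule $l\xrightarrow{[]}[\mathsf{Setup}_i(\bar u)]$, role part $[]\xrightarrow{[\lambda_\rho(\bar y)]}[\mathsf{Setup}_i(\bar u)]$ and environment part $l\xrightarrow{[\lambda_\rho(\bar y)]}[]$. Then $\mathcal{R}^{\mathsf{role}}_i = \mathcal{R}'_i\uplus\mathcal{R}^i_{\mathsf{io}}$ and $\mathcal{R}^e_{\mathsf{env}} = \mathcal{R}^-_{\mathsf{env}}\uplus\mathcal{R}^e_{\mathsf{io}}$. Compositions. $|||_{i,\mathit{rid}} X_{i,\mathit{rid}}$ has as states functions $f$ mapping each $(i,\mathit{rid})$ to a state of $X_{i,\mathit{rid}}$, initial state the pointwise initial states, and transitions $f\xrightarrow{a} f[(i,\mathit{rid})\mapsto S']$ whenever $f(i,\mathit{rid})\xrightarrow{a}S'$ in $X_{i,\mathit{rid}}$. $X_1\|_\Lambda X_2$ has states $(S_1,S_2)$ and transitions $(S_1,S_2)\xrightarrow{a}(S_1',S_2')$ if either (i) $a=[]$ and for some $a'$ with $a'=_\mathsf{E}b$ for some $b\in\Lambda$, $S_1\xrightarrow{a'}S_1'$ and $S_2\xrightarrow{a'}S_2'$; or (ii) $a$ is not $\mathsf{E}$-equal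 to an element of $\Lambda$, $S_1\xrightarrow{a}S_1'$ and $S_2'=S_2$; or (iii) $a$ is not $\mathsf{E}$-equal to an element of $\Lambda$, $S_2\xrightarrow{a}S_2'$ and $S_1'=S_1$. *)

theory Defs
  imports "HOL-Library.Multiset"
begin

datatype vsort = SFresh | SPub | SMsg
type_synonym var = "vsort \<times> nat"

datatype ('f,'n) trm = FreshN 'n | PubN 'n | Var var | App 'f "('f,'n) trm list"

fun vars_trm :: "('f,'n) trm \<Rightarrow> var set" where
  "vars_trm (FreshN a) = {}"
| "vars_trm (PubN a) = {}"
| "vars_trm (Var x) = {x}"
| "vars_trm (App f ts) = \<Union> (set (map vars_trm ts))"

text \<open>Messages are ground terms.\<close>
definition ground :: "('f,'n) trm \<Rightarrow> bool" where
  "ground t \<longleftrightarrow> vars_trm t = {}"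

fun subst :: "(var \<Rightarrow> ('f,'n) trm) \<Rightarrow> ('f,'n) trm \<Rightarrow> ('f,'n) trm" where
  "subst \<theta> (FreshN a) = FreshN a"
| "subst \<theta> (PubN a) = PubN a"
| "subst \<theta> (Var x) = \<theta> x"
| "subst \<theta> (App f ts) = App f (map (subst \<theta>) ts)"

definition ground_subst :: "(var \<Rightarrow> ('f,'n) trm) \<Rightarrow> bool" where
  "ground_subst \<theta> \<longleftrightarrow> (\<forall>x. ground (\<theta> x))
     \<and> (\<forall>m. \<theta> (SFresh, m) \<in> range FreshN) \<and> (\<forall>m. \<theta> (SPub, m) \<in> range PubN)"

definition equational_theory :: "(('f,'n) trm \<Rightarrow> ('f,'n) trm \<Rightarrow> bool) \<Rightarrow> bool" where
  "equational_theory E \<longleftrightarrow> equivp E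
     \<and> (\<forall>f ss ts. list_all2 E ss ts \<longrightarrow> E (App f ss) (App f ts))
     \<and> (\<forall>\<theta> s t. E s t \<longrightarrow> E (subst \<theta> s) (subst \<theta> t))"

datatype ('s,'f,'n) fact = Fact (fsym: 's) (fargs: "('f,'n) trm list")

text \<open>A rule  l --a--> r  is the triple (l, a, r) of multisets of facts.\<close>
type_synonym ('s,'f,'n) rule =
  "('s,'f,'n) fact multiset \<times> ('s,'f,'n) fact multiset \<times> ('s,'f,'n) fact multiset"

definition prem :: "('s,'f,'n) rule \<Rightarrow> ('s,'f,'n) fact multiset" where "prem \<rho> = fst \<rho>"
definition lab :: "('s,'f,'n) rule \<Rightarrow> ('s,'f,'n) fact multiset" where "lab \<rho> = fst (snd \<rho>)"
definition concl :: "('s,'f,'n) rule \<Rightarrow> ('s,'f,'n) fact multiset" where "concl \<rho> = snd (snd \<rho>)"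

definition ground_fact :: "('s,'f,'n) fact \<Rightarrow> bool" where
  "ground_fact f \<longleftrightarrow> (\<forall>t\<in>set (fargs f). ground t)"

definition subst_fact :: "(var \<Rightarrow> ('f,'n) trm) \<Rightarrow> ('s,'f,'n) fact \<Rightarrow> ('s,'f,'n) fact" where
  "subst_fact \<theta> F = Fact (fsym F) (map (subst \<theta>) (fargs F))"

definition subst_ms :: "(var \<Rightarrow> ('f,'n) trm) \<Rightarrow> ('s,'f,'n) fact multiset \<Rightarrow> ('s,'f,'n) fact multiset" where
  "subst_ms \<theta> M = image_mset (subst_fact \<theta>) M"

definition subst_rule :: "(var \<Rightarrow> ('f,'n) trm) \<Rightarrow> ('s,'f,'n) rule \<Rightarrow> ('s,'f,'n) rule" where
  "subst_rule \<theta> \<rho> = (subst_ms \<theta> (prem \<rho>), subst_ms \<theta> (lab \<rho>), subst_ms \<theta> (concl \<rho>))"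

definition vars_fact :: "('s,'f,'n) fact \<Rightarrow> var set" where
  "vars_fact F = \<Union> (set (map vars_trm (fargs F)))"

definition vars_rule :: "('s,'f,'n) rule \<Rightarrow> var set" where
  "vars_rule \<rho> = (\<Union>F\<in>set_mset (prem \<rho> + lab \<rho> + concl \<rho>). vars_fact F)"

definition eq_fact :: "(('f,'n) trm \<Rightarrow> ('f,'n) trm \<Rightarrow> bool) \<Rightarrow> ('s,'f,'n) fact \<Rightarrow> ('s,'f,'n) fact \<Rightarrow> bool" where
  "eq_fact E F G \<longleftrightarrow> fsym F = fsym G \<and> list_all2 E (fargs F) (fargs G)"

definition eq_ms :: "(('f,'n) trm \<Rightarrow> ('f,'n) trm \<Rightarrow> bool) \<Rightarrow> ('s,'f,'n) fact multiset \<Rightarrow> ('s,'f,'n) fact multiset \<Rightarrow> bool" where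
  "eq_ms E M N \<longleftrightarrow> rel_mset (eq_fact E) M N"

text \<open>Linear part of a multiset (per = persistent fact symbols).\<close>
definition lin_part :: "('s \<Rightarrow> bool) \<Rightarrow> ('s,'f,'n) fact multiset \<Rightarrow> ('s,'f,'n) fact multiset" where
  "lin_part per M = filter_mset (\<lambda>F. \<not> per (fsym F)) M"

definition per_part :: "('s \<Rightarrow> bool) \<Rightarrow> ('s,'f,'n) fact multiset \<Rightarrow> ('s,'f,'n) fact multiset" where
  "per_part per M = filter_mset (\<lambda>F. per (fsym F)) M"

datatype ('st,'a) lts = LTS (lts_init: 'st) (lts_step: "'st \<Rightarrow> 'a \<Rightarrow> 'st \<Rightarrow> bool")

inductive reach :: "('st,'a) lts \<Rightarrow> 'a list \<Rightarrow> 'st \<Rightarrow> bool" for X where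
  reach_init: "reach X [] (lts_init X)"
| reach_step: "reach X tr S \<Longrightarrow> lts_step X S a S' \<Longrightarrow> reach X (tr @ [a]) S'"

definition Tr :: "('st,'a) lts \<Rightarrow> 'a list set" where
  "Tr X = {tr. \<exists>S. reach X tr S}"

definition msr_step ::
  "('s \<Rightarrow> bool) \<Rightarrow> (('f,'n) trm \<Rightarrow> ('f,'n) trm \<Rightarrow> bool) \<Rightarrow> ('s,'f,'n) rule set
   \<Rightarrow> ('s,'f,'n) fact multiset \<Rightarrow> ('s,'f,'n) fact multiset \<Rightarrow> ('s,'f,'n) fact multiset \<Rightarrow> bool" where
  "msr_step per E R S a' S' \<longleftrightarrow>
     (\<exists>\<rho>\<in>R. \<exists>\<theta> l' r'. ground_subst \<theta>
        \<and> (\<forall>F\<in>#l' + a' + r'. ground_fact F)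
        \<and> eq_ms E l' (subst_ms \<theta> (prem \<rho>))
        \<and> eq_ms E a' (subst_ms \<theta> (lab \<rho>))
        \<and> eq_ms E r' (subst_ms \<theta> (concl \<rho>))
        \<and> lin_part per l' \<subseteq># S
        \<and> set_mset (per_part per l') \<subseteq> set_mset S
        \<and> S' = (S - lin_part per l') + r')"

definition msr_lts ::
  "('s \<Rightarrow> bool) \<Rightarrow> (('f,'n) trm \<Rightarrow> ('f,'n) trm \<Rightarrow> bool) \<Rightarrow> ('s,'f,'n) rule set
   \<Rightarrow> (('s,'f,'n) fact multiset, ('s,'f,'n) fact multiset) lts" where
  "msr_lts per E R = LTS {#} (msr_step per E R)"

definition interleave :: "'k set \<Rightarrow> ('k \<Rightarrow> ('st,'a) lts) \<Rightarrow> ('k \<Rightarrow> 'st, 'a) lts" where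
  "interleave K X = LTS (\<lambda>k. lts_init (X k))
     (\<lambda>f a f'. \<exists>k\<in>K. \<exists>S'. lts_step (X k) (f k) a S' \<and> f' = f(k := S'))"

text \<open>Synchronous composition  X1 ||_\<Lambda> X2  (labels are multisets, [] is the empty label).\<close>
definition sync ::
  "('a multiset \<Rightarrow> 'a multiset \<Rightarrow> bool) \<Rightarrow> 'a multiset set
   \<Rightarrow> ('s1, 'a multiset) lts \<Rightarrow> ('s2, 'a multiset) lts \<Rightarrow> ('s1 \<times> 's2, 'a multiset) lts" where
  "sync eq \<Lambda> X1 X2 = LTS (lts_init X1, lts_init X2)
     (\<lambda>(S1, S2) a (S1', S2').
        (a = {#} \<and> (\<exists>a'. (\<exists>b\<in>\<Lambda>. eq a' b) \<and> lts_step X1 S1 a' S1' \<and> lts_step X2 S2 a' S2'))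
      \<or> (\<not> (\<exists>b\<in>\<Lambda>. eq a b) \<and> lts_step X1 S1 a S1' \<and> S2' = S2)
      \<or> (\<not> (\<exists>b\<in>\<Lambda>. eq a b) \<and> lts_step X2 S2 a S2' \<and> S1' = S1))"

text \<open>Classification of fact symbols: Sigma_act, Sigma_env, Sigma^i_state.\<close>
datatype symclass = CAct | CEnv | CState nat

definition protocol_format ::
  "nat \<Rightarrow> ('s \<Rightarrow> bool) \<Rightarrow> ('s \<Rightarrow> symclass) \<Rightarrow> 's set \<Rightarrow> 's set \<Rightarrow> 's \<Rightarrow> 's \<Rightarrow> 's \<Rightarrow> 's
   \<Rightarrow> (nat \<Rightarrow> 's) \<Rightarrow> ('s \<Rightarrow> nat) \<Rightarrow> ('s,'f,'n) rule set \<Rightarrow> (nat \<Rightarrow> ('s,'f,'n) rule set) \<Rightarrow> bool" where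
  "protocol_format n per cls Sin Sout K Fr In Out Setup ar Renv Rr \<longleftrightarrow>
     \<comment> \<open>the state symbols are those of roles 1..n\<close>
     (\<forall>s i. cls s = CState i \<longrightarrow> 1 \<le> i \<and> i \<le> n)
     \<comment> \<open>Sigma_in, Sigma_out disjoint subsets of Sigma_env\<close>
   \<and> Sin \<inter> Sout = {} \<and> (\<forall>s\<in>Sin \<union> Sout. cls s = CEnv)
     \<comment> \<open>reserved symbols\<close>
   \<and> per K \<and> \<not> per Fr \<and> \<not> per In \<and> \<not> per Out
   \<and> Fr \<in> Sin \<and> In \<in> Sin \<and> Fr \<noteq> In \<and> Out \<in> Sout
   \<and> cls K = CEnv \<and> K \<notin> Sin \<union> Sout
     \<comment> \<open>setup symbols\<close>
   \<and> (\<forall>i\<in>{1..n}. Setup i \<in> Sin) \<and> inj_on Setup {1..n}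
   \<and> Fr \<notin> Setup ` {1..n} \<and> In \<notin> Setup ` {1..n}
     \<comment> \<open>facts have the arity of their symbol\<close>
   \<and> (\<forall>\<rho>\<in>Renv \<union> (\<Union>i\<in>{1..n}. Rr i). \<forall>F\<in>#prem \<rho> + lab \<rho> + concl \<rho>. length (fargs F) = ar (fsym F))
     \<comment> \<open>R_env contains the freshness rule\<close>
   \<and> (\<exists>x. fst x = SFresh \<and> ({#}, {#}, {#Fact Fr [Var x]#}) \<in> Renv)
     \<comment> \<open>all rule labels use only action symbols\<close>
   \<and> (\<forall>\<rho>\<in>Renv \<union> (\<Union>i\<in>{1..n}. Rr i). \<forall>F\<in>#lab \<rho>. cls (fsym F) = CAct)
     \<comment> \<open>environment rules use only environment symbols in premises and conclusions\<close>
   \<and> (\<forall>\<rho>\<in>Renv. \<forall>F\<in>#prem \<rho> + concl \<rho>. cls (fsym F) = CEnv)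
     \<comment> \<open>role setup rules: lie in R_env, produce a single Setup_i fact (whose first
         argument is a thread-identifier variable of fresh sort), have empty label\<close>
   \<and> (\<forall>\<rho>\<in>Renv \<union> (\<Union>i\<in>{1..n}. Rr i). \<forall>i\<in>{1..n}.
        (\<exists>F\<in>#concl \<rho>. fsym F = Setup i) \<longrightarrow>
          \<rho> \<in> Renv \<and> lab \<rho> = {#}
          \<and> (\<exists>x us. fst x = SFresh \<and> concl \<rho> = {#Fact (Setup i) (Var x # us)#}))
     \<comment> \<open>role rules\<close>
   \<and> (\<exists>k::nat \<Rightarrow> nat. \<forall>i\<in>{1..n}. 1 \<le> k i \<and> (\<forall>\<rho>\<in>Rr i.
        (\<forall>F\<in>#prem \<rho>. cls (fsym F) = CState i \<or> fsym F \<in> Sin)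
      \<and> (\<forall>F\<in>#concl \<rho>. cls (fsym F) = CState i \<or> fsym F \<in> Sout)
      \<and> (\<exists>F\<in>#concl \<rho>. cls (fsym F) = CState i)
      \<and> (\<exists>x ts. fst x = SFresh \<and> length ts = k i \<and> hd ts = Var x \<and>
           (\<forall>F\<in>#prem \<rho> + concl \<rho>. (cls (fsym F) = CState i \<or> fsym F = Setup i)
              \<longrightarrow> take (k i) (fargs F) = ts))))"

text \<open>Extended fact symbols: original symbols, buffer symbols F_i, and the
  synchronization action symbols lambda_rho, indexed by a description of the I/O rule rho.\<close>
datatype ('s,'f,'n) iodesc = IOIn nat 's | IOOut nat 's | IOSetup nat "('s,'f,'n) rule"
datatype ('s,'f,'n) xsym = Orig 's | Buf nat 's | Lam "('s,'f,'n) iodesc"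

type_synonym ('s,'f,'n) xfact = "(('s,'f,'n) xsym, 'f, 'n) fact"
type_synonym ('s,'f,'n) xrule = "(('s,'f,'n) xsym, 'f, 'n) rule"

fun xper :: "('s \<Rightarrow> bool) \<Rightarrow> ('s,'f,'n) xsym \<Rightarrow> bool" where
  "xper per (Orig s) = per s"
| "xper per (Buf i s) = False"
| "xper per (Lam d) = False"

definition lift_fact :: "('s,'f,'n) fact \<Rightarrow> ('s,'f,'n) xfact" where
  "lift_fact F = Fact (Orig (fsym F)) (fargs F)"

definition lift_rule :: "('s,'f,'n) rule \<Rightarrow> ('s,'f,'n) xrule" where
  "lift_rule \<rho> = (image_mset lift_fact (prem \<rho>), image_mset lift_fact (lab \<rho>), image_mset lift_fact (concl \<rho>))"

definition Sin_minus :: "nat \<Rightarrow> 's set \<Rightarrow> (nat \<Rightarrow> 's) \<Rightarrow> 's set" where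
  "Sin_minus n Sin Setup = Sin - Setup ` {1..n}"

definition tid :: "('s \<Rightarrow> symclass) \<Rightarrow> nat \<Rightarrow> ('s,'f,'n) rule \<Rightarrow> var" where
  "tid cls i \<rho> = (SOME x. \<exists>F\<in>#concl \<rho>. cls (fsym F) = CState i \<and> fargs F \<noteq> [] \<and> hd (fargs F) = Var x)"

definition bufferize :: "'s set \<Rightarrow> nat \<Rightarrow> var \<Rightarrow> ('s,'f,'n) fact \<Rightarrow> ('s,'f,'n) xfact" where
  "bufferize B i x F = (if fsym F \<in> B then Fact (Buf i (fsym F)) (Var x # fargs F) else lift_fact F)"

definition Rprime :: "nat \<Rightarrow> ('s \<Rightarrow> symclass) \<Rightarrow> 's set \<Rightarrow> 's set \<Rightarrow> (nat \<Rightarrow> 's)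
   \<Rightarrow> nat \<Rightarrow> ('s,'f,'n) rule \<Rightarrow> ('s,'f,'n) xrule" where
  "Rprime n cls Sin Sout Setup i \<rho> =
     (let B = Sin_minus n Sin Setup \<union> Sout; x = tid cls i \<rho> in
      (image_mset (bufferize B i x) (prem \<rho>), image_mset (bufferize B i x) (lab \<rho>),
       image_mset (bufferize B i x) (concl \<rho>)))"

definition setup_rules :: "(nat \<Rightarrow> 's) \<Rightarrow> ('s,'f,'n) rule set \<Rightarrow> nat \<Rightarrow> ('s,'f,'n) rule set" where
  "setup_rules Setup Renv i = {\<rho>\<in>Renv. \<exists>F\<in>#concl \<rho>. fsym F = Setup i}"

definition Renv_minus :: "nat \<Rightarrow> (nat \<Rightarrow> 's) \<Rightarrow> ('s,'f,'n) rule set \<Rightarrow> ('s,'f,'n) rule set" where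
  "Renv_minus n Setup Renv = Renv - (\<Union>i\<in>{1..n}. setup_rules Setup Renv i)"

definition ridv :: var where "ridv = (SFresh, 0)"
definition xvars :: "nat \<Rightarrow> ('f,'n) trm list" where
  "xvars m = map (\<lambda>j. Var (SMsg, Suc j)) [0..<m]"

definition in_rule :: "('s \<Rightarrow> nat) \<Rightarrow> nat \<Rightarrow> 's \<Rightarrow> ('s,'f,'n) xrule" where
  "in_rule ar i F = ({#Fact (Orig F) (xvars (ar F))#}, {#}, {#Fact (Buf i F) (Var ridv # xvars (ar F))#})"

definition out_rule :: "('s \<Rightarrow> nat) \<Rightarrow> nat \<Rightarrow> 's \<Rightarrow> ('s,'f,'n) xrule" where
  "out_rule ar i G = ({#Fact (Buf i G) (Var ridv # xvars (ar G))#}, {#}, {#Fact (Orig G) (xvars (ar G))#})"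

definition iodescs :: "nat \<Rightarrow> 's set \<Rightarrow> 's set \<Rightarrow> (nat \<Rightarrow> 's) \<Rightarrow> ('s,'f,'n) rule set
    \<Rightarrow> nat \<Rightarrow> ('s,'f,'n) iodesc set" where
  "iodescs n Sin Sout Setup Renv i =
     {IOIn i F | F. F \<in> Sin_minus n Sin Setup} \<union> {IOOut i G | G. G \<in> Sout}
     \<union> IOSetup i ` setup_rules Setup Renv i"

fun io_rule :: "('s \<Rightarrow> nat) \<Rightarrow> ('s,'f,'n) iodesc \<Rightarrow> ('s,'f,'n) xrule" where
  "io_rule ar (IOIn i F) = in_rule ar i F"
| "io_rule ar (IOOut i G) = out_rule ar i G"
| "io_rule ar (IOSetup i \<rho>) = lift_rule \<rho>"

definition R_io :: "nat \<Rightarrow> 's set \<Rightarrow> 's set \<Rightarrow> (nat \<Rightarrow> 's) \<Rightarrow> ('s \<Rightarrow> nat)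
    \<Rightarrow> ('s,'f,'n) rule set \<Rightarrow> ('s,'f,'n) xrule set" where
  "R_io n Sin Sout Setup ar Renv = (\<Union>i\<in>{1..n}. io_rule ar ` iodescs n Sin Sout Setup Renv i)"

definition R_intf :: "nat \<Rightarrow> ('s \<Rightarrow> symclass) \<Rightarrow> 's set \<Rightarrow> 's set \<Rightarrow> (nat \<Rightarrow> 's) \<Rightarrow> ('s \<Rightarrow> nat)
    \<Rightarrow> ('s,'f,'n) rule set \<Rightarrow> (nat \<Rightarrow> ('s,'f,'n) rule set) \<Rightarrow> ('s,'f,'n) xrule set" where
  "R_intf n cls Sin Sout Setup ar Renv Rr =
     lift_rule ` Renv_minus n Setup Renv \<union> R_io n Sin Sout Setup ar Renv
     \<union> (\<Union>i\<in>{1..n}. Rprime n cls Sin Sout Setup i ` Rr i)"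

definition yvars :: "('s,'f,'n) xrule \<Rightarrow> var list" where
  "yvars \<rho> = (SOME ys. distinct ys \<and> set ys = vars_rule \<rho>)"

definition lam_label :: "('s \<Rightarrow> nat) \<Rightarrow> ('s,'f,'n) iodesc \<Rightarrow> ('s,'f,'n) xfact multiset" where
  "lam_label ar d = {#Fact (Lam d) (map Var (yvars (io_rule ar d)))#}"

fun role_io :: "('s \<Rightarrow> nat) \<Rightarrow> ('s,'f,'n) iodesc \<Rightarrow> ('s,'f,'n) xrule" where
  "role_io ar (IOIn i F) = ({#}, lam_label ar (IOIn i F), concl (in_rule ar i F))"
| "role_io ar (IOOut i G) = (prem (out_rule ar i G), lam_label ar (IOOut i G), {#})"
| "role_io ar (IOSetup i \<rho>) = ({#}, lam_label ar (IOSetup i \<rho>), concl (lift_rule \<rho>))"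

fun env_io :: "('s \<Rightarrow> nat) \<Rightarrow> ('s,'f,'n) iodesc \<Rightarrow> ('s,'f,'n) xrule" where
  "env_io ar (IOIn i F) = (prem (in_rule ar i F), lam_label ar (IOIn i F), {#})"
| "env_io ar (IOOut i G) = ({#}, lam_label ar (IOOut i G), concl (out_rule ar i G))"
| "env_io ar (IOSetup i \<rho>) = (prem (lift_rule \<rho>), lam_label ar (IOSetup i \<rho>), {#})"

definition R_io_role :: "nat \<Rightarrow> 's set \<Rightarrow> 's set \<Rightarrow> (nat \<Rightarrow> 's) \<Rightarrow> ('s \<Rightarrow> nat)
    \<Rightarrow> ('s,'f,'n) rule set \<Rightarrow> nat \<Rightarrow> ('s,'f,'n) xrule set" where
  "R_io_role n Sin Sout Setup ar Renv i = role_io ar ` iodescs n Sin Sout Setup Renv i"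

definition R_env_e :: "nat \<Rightarrow> 's set \<Rightarrow> 's set \<Rightarrow> (nat \<Rightarrow> 's) \<Rightarrow> ('s \<Rightarrow> nat)
    \<Rightarrow> ('s,'f,'n) rule set \<Rightarrow> ('s,'f,'n) xrule set" where
  "R_env_e n Sin Sout Setup ar Renv =
     lift_rule ` Renv_minus n Setup Renv
     \<union> (\<Union>i\<in>{1..n}. env_io ar ` iodescs n Sin Sout Setup Renv i)"

fun tid_io :: "('s,'f,'n) iodesc \<Rightarrow> var" where
  "tid_io (IOIn i F) = ridv"
| "tid_io (IOOut i G) = ridv"
| "tid_io (IOSetup i \<rho>) = (SOME x. \<exists>F\<in>#concl \<rho>. fargs F \<noteq> [] \<and> hd (fargs F) = Var x)"

definition R_role_tid :: "nat \<Rightarrow> ('s \<Rightarrow> symclass) \<Rightarrow> 's set \<Rightarrow> 's set \<Rightarrow> (nat \<Rightarrow> 's) \<Rightarrow> ('s \<Rightarrow> nat)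
    \<Rightarrow> ('s,'f,'n) rule set \<Rightarrow> (nat \<Rightarrow> ('s,'f,'n) rule set) \<Rightarrow> nat \<Rightarrow> (('s,'f,'n) xrule \<times> var) set" where
  "R_role_tid n cls Sin Sout Setup ar Renv Rr i =
     {(Rprime n cls Sin Sout Setup i \<rho>, tid cls i \<rho>) | \<rho>. \<rho> \<in> Rr i}
     \<union> {(role_io ar d, tid_io d) | d. d \<in> iodescs n Sin Sout Setup Renv i}"

definition R_role :: "nat \<Rightarrow> ('s \<Rightarrow> symclass) \<Rightarrow> 's set \<Rightarrow> 's set \<Rightarrow> (nat \<Rightarrow> 's) \<Rightarrow> ('s \<Rightarrow> nat)
    \<Rightarrow> ('s,'f,'n) rule set \<Rightarrow> (nat \<Rightarrow> ('s,'f,'n) rule set) \<Rightarrow> nat \<Rightarrow> ('s,'f,'n) xrule set" where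
  "R_role n cls Sin Sout Setup ar Renv Rr i = fst ` R_role_tid n cls Sin Sout Setup ar Renv Rr i"

definition fix_tid :: "var \<Rightarrow> 'n \<Rightarrow> var \<Rightarrow> ('f,'n) trm" where
  "fix_tid x rid = (\<lambda>y. if y = x then FreshN rid else Var y)"

definition R_role_rid :: "nat \<Rightarrow> ('s \<Rightarrow> symclass) \<Rightarrow> 's set \<Rightarrow> 's set \<Rightarrow> (nat \<Rightarrow> 's) \<Rightarrow> ('s \<Rightarrow> nat)
    \<Rightarrow> ('s,'f,'n) rule set \<Rightarrow> (nat \<Rightarrow> ('s,'f,'n) rule set) \<Rightarrow> nat \<Rightarrow> 'n \<Rightarrow> ('s,'f,'n) xrule set" where
  "R_role_rid n cls Sin Sout Setup ar Renv Rr i rid =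
     {subst_rule (fix_tid x rid) \<rho> | \<rho> x. (\<rho>, x) \<in> R_role_tid n cls Sin Sout Setup ar Renv Rr i}"

definition Lambda :: "nat \<Rightarrow> 's set \<Rightarrow> 's set \<Rightarrow> (nat \<Rightarrow> 's) \<Rightarrow> ('s \<Rightarrow> nat)
    \<Rightarrow> ('s,'f,'n) rule set \<Rightarrow> ('s,'f,'n) xfact multiset set" where
  "Lambda n Sin Sout Setup ar Renv =
     {subst_ms \<theta> (lab \<rho>) | \<rho> \<theta>. \<rho> \<in> (\<Union>i\<in>{1..n}. R_io_role n Sin Sout Setup ar Renv i)
                              \<and> (\<forall>x. ground (\<theta> x))}"

end

theory Submission
  imports Defs
begin

lemma rel_mset_add0:
  "rel_mset R M N \<Longrightarrow> rel_mset R M' N' \<longrightarrow> rel_mset R (M + M') (N + N')"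
  by (induction rule: rel_mset_induct) (auto intro: rel_mset_Plus)

lemma rel_mset_add:
  assumes "rel_mset R M N" "rel_mset R M' N'"
  shows "rel_mset R (M + M') (N + N')"
  using rel_mset_add0 assms by blast

lemma rel_mset_single: "rel_mset R {#a#} {#b#} \<longleftrightarrow> R a b"
  using msed_rel_invL[of R a "{#}" "{#b#}"] rel_mset_Plus[of R a b "{#}" "{#}"]
  by (auto simp: rel_mset_Zero rel_mset_Zero_iff)

context
  fixes E :: "('f,'n) trm \<Rightarrow> ('f,'n) trm \<Rightarrow> bool"
  assumes E: "equational_theory E"
begin

lemma E_equivp: "equivp E" using E by (simp add: equational_theory_def)
lemma E_refl: "E t t" using E_equivp by (simp add: equivp_reflp)
lemma E_sym: "E s t \<Longrightarrow> E t s" using E_equivp by (meson equivp_symp)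
lemma E_trans: "E s t \<Longrightarrow> E t u \<Longrightarrow> E s u" using E_equivp by (meson equivp_transp)
lemma E_cong: "list_all2 E ss ts \<Longrightarrow> E (App f ss) (App f ts)" using E by (simp add: equational_theory_def)

lemma eq_fact_sym: "eq_fact E F G \<Longrightarrow> eq_fact E G F"
  by (auto simp: eq_fact_def list_all2_conv_all_nth intro: E_sym)
lemma eq_fact_trans: "eq_fact E F G \<Longrightarrow> eq_fact E G H \<Longrightarrow> eq_fact E F H"
  by (auto simp: eq_fact_def list_all2_conv_all_nth) (metis E_trans)

lemma eq_ms_sym: "eq_ms E M N \<Longrightarrow> eq_ms E N M"
proof -
  assume "eq_ms E M N"
  hence "rel_mset (eq_fact E)\<inverse>\<inverse> N M" unfolding eq_ms_def multiset.rel_conversep by simp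
  moreover have "(eq_fact E)\<inverse>\<inverse> \<le> eq_fact E" using eq_fact_sym by auto
  ultimately show ?thesis unfolding eq_ms_def using multiset.rel_mono by blast
qed

lemma eq_ms_trans: "eq_ms E M N \<Longrightarrow> eq_ms E N P \<Longrightarrow> eq_ms E M P"
proof -
  assume "eq_ms E M N" "eq_ms E N P"
  hence "rel_mset (eq_fact E OO eq_fact E) M P" unfolding eq_ms_def multiset.rel_compp by blast
  moreover have "eq_fact E OO eq_fact E \<le> eq_fact E" using eq_fact_trans by auto
  ultimately show ?thesis unfolding eq_ms_def using multiset.rel_mono by blast
qed

lemma subst_agree:
  "(\<And>v. v \<in> vars_trm t \<Longrightarrow> E (\<theta>1 v) (\<theta>2 v)) \<Longrightarrow> E (subst \<theta>1 t) (subst \<theta>2 t)"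
proof (induction t)
  case (App f ts)
  have "list_all2 E (map (subst \<theta>1) ts) (map (subst \<theta>2) ts)"
    unfolding list_all2_conv_all_nth
  proof (intro conjI allI impI)
    fix i assume i: "i < length (map (subst \<theta>1) ts)"
    hence "ts ! i \<in> set ts" by simp
    thus "E (map (subst \<theta>1) ts ! i) (map (subst \<theta>2) ts ! i)"
      using App.IH[OF \<open>ts ! i \<in> set ts\<close>] App.prems \<open>ts ! i \<in> set ts\<close> i by (simp add: Bex_def) (meson nth_mem)
  qed simp
  then show ?case by (simp add: E_cong)
qed (auto simp: E_refl)

lemma subst_ms_agree:
  assumes "\<And>v. v \<in> (\<Union>F\<in>set_mset M. vars_fact F) \<Longrightarrow> E (\<theta>1 v) (\<theta>2 v)"
  shows "eq_ms E (subst_ms \<theta>1 M) (subst_ms \<theta>2 M)"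
  unfolding eq_ms_def subst_ms_def multiset.rel_map
proof (rule multiset.rel_refl_strong)
  fix F assume F: "F \<in># M"
  show "eq_fact E (subst_fact \<theta>1 F) (subst_fact \<theta>2 F)"
    unfolding eq_fact_def subst_fact_def using F assms
    by (auto simp: list_all2_conv_all_nth vars_fact_def intro!: subst_agree) (metis nth_mem)
qed

end

lemma eq_ms_fsym: "eq_ms E M N \<Longrightarrow> image_mset fsym M = image_mset fsym N"
proof -
  assume "eq_ms E M N"
  hence "rel_mset (\<lambda>x y. fsym x = fsym y) M N"
    unfolding eq_ms_def by (rule multiset.rel_mono[THEN predicate2D, rotated]) (auto simp: eq_fact_def)
  hence "rel_mset (=) (image_mset fsym M) (image_mset fsym N)"
    by (simp add: multiset.rel_map)
  thus ?thesis by (simp add: multiset.rel_eq)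
qed

lemma fsym_subst_ms[simp]: "image_mset fsym (subst_ms \<theta> M) = image_mset fsym M"
  by (simp add: subst_ms_def subst_fact_def multiset.map_comp comp_def)

lemma subst_subst: "subst \<theta> (subst \<sigma> t) = subst (\<lambda>v. subst \<theta> (\<sigma> v)) t"
  by (induction t) auto

lemma subst_ms_subst_ms: "subst_ms \<theta> (subst_ms \<sigma> M) = subst_ms (\<lambda>v. subst \<theta> (\<sigma> v)) M"
  unfolding subst_ms_def subst_fact_def by (simp add: subst_ms_def subst_fact_def multiset.map_comp comp_def subst_subst)

lemma vars_subst: "vars_trm (subst \<theta> t) = (\<Union>v\<in>vars_trm t. vars_trm (\<theta> v))"
  by (induction t) auto

lemma ground_subst_trm: "(\<forall>x. ground (\<theta> x)) \<Longrightarrow> ground (subst \<theta> t)"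
  by (auto simp: ground_def vars_subst)

lemma finite_vars_trm: "finite (vars_trm t)"
  by (induction t) auto

lemma finite_vars_rule: "finite (vars_rule \<rho>)"
  by (simp add: vars_rule_def vars_fact_def finite_vars_trm)

lemma yvars_set: "set (yvars \<rho>) = vars_rule \<rho>"
  unfolding yvars_def using finite_distinct_list[OF finite_vars_rule[of \<rho>]]
  by (metis (mono_tags, lifting) someI_ex)


lemma msr_step_mono: "R \<subseteq> R' \<Longrightarrow> msr_step P E R S a S' \<Longrightarrow> msr_step P E R' S a S'"
  unfolding msr_step_def by blast

lemma msr_step_add: "msr_step P E R S a S' \<Longrightarrow> msr_step P E R (S + T) a (S' + T)"
  unfolding msr_step_def
  apply (elim bexE exE conjE)
  subgoal for \<rho> \<theta> l' r'
    apply (rule bexI[of _ \<rho>], rule exI[of _ \<theta>], rule exI[of _ l'], rule exI[of _ r'])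
     apply (auto simp: subset_mset.add_increasing2 mset_subset_eq_exists_conv)
    done
  done

lemma subst_ms_lam: "subst_ms \<theta> {#Fact s (map Var ys)#} = {#Fact s (map \<theta> ys)#}"
  by (simp add: subst_ms_def subst_fact_def comp_def)

lemma prem_subst_rule: "prem (subst_rule \<sigma> \<rho>) = subst_ms \<sigma> (prem \<rho>)"
  and lab_subst_rule: "lab (subst_rule \<sigma> \<rho>) = subst_ms \<sigma> (lab \<rho>)"
  and concl_subst_rule: "concl (subst_rule \<sigma> \<rho>) = subst_ms \<sigma> (concl \<rho>)"
  by (simp_all add: subst_rule_def prem_def lab_def concl_def)

lemma subst_fix: "subst \<theta> (fix_tid x rid v) = (if v = x then FreshN rid else \<theta> v)"
  by (simp add: fix_tid_def)

lemma fsym_role_io: "image_mset fsym (lab (role_io ar d)) = {#Lam d#}"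
  by (cases d) (simp_all add: lam_label_def lab_def)
lemma fsym_env_io: "image_mset fsym (lab (env_io ar d)) = {#Lam d#}"
  by (cases d) (simp_all add: lam_label_def lab_def)
lemma lab_role_env: "lab (role_io ar d) = lab (env_io ar d)"
  by (cases d) (simp_all add: lab_def)

lemma fsym_Rprime: "s \<in># image_mset fsym (lab (Rprime n cls Sin Sout Setup i \<rho>)) \<Longrightarrow> s \<notin> range Lam"
  by (auto simp: Rprime_def Let_def lab_def bufferize_def lift_fact_def)
lemma fsym_lift: "s \<in># image_mset fsym (lab (lift_rule \<rho>)) \<Longrightarrow> s \<notin> range Lam"
  by (auto simp: lift_rule_def lab_def lift_fact_def)


context
  fixes n :: nat
    and per :: "'s \<Rightarrow> bool"
    and cls :: "'s \<Rightarrow> symclass"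
    and Sin Sout :: "'s set"
    and K Fr In Out :: 's
    and Setup :: "nat \<Rightarrow> 's"
    and ar :: "'s \<Rightarrow> nat"
    and Renv :: "('s,'f,'n) rule set"
    and Rr :: "nat \<Rightarrow> ('s,'f,'n) rule set"
    and E :: "('f,'n) trm \<Rightarrow> ('f,'n) trm \<Rightarrow> bool"
  assumes E: "equational_theory E"
    and pf: "protocol_format n per cls Sin Sout K Fr In Out Setup ar Renv Rr"
begin

lemma tid_fresh:
  assumes i: "i \<in> {1..n}" and \<rho>: "\<rho> \<in> Rr i"
  shows "fst (tid cls i \<rho>) = SFresh"
proof -
  have "\<exists>k :: nat \<Rightarrow> nat. \<forall>i\<in>{1..n}. 1 \<le> k i \<and> (\<forall>\<rho>\<in>Rr i.
        (\<forall>F\<in>#prem \<rho>. cls (fsym F) = CState i \<or> fsym F \<in> Sin)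
      \<and> (\<forall>F\<in>#concl \<rho>. cls (fsym F) = CState i \<or> fsym F \<in> Sout)
      \<and> (\<exists>F\<in>#concl \<rho>. cls (fsym F) = CState i)
      \<and> (\<exists>x ts. fst x = SFresh \<and> length ts = k i \<and> hd ts = Var x \<and>
           (\<forall>F\<in>#prem \<rho> + concl \<rho>. (cls (fsym F) = CState i \<or> fsym F = Setup i)
              \<longrightarrow> take (k i) (fargs F) = ts)))"
    using pf unfolding protocol_format_def by (elim conjE) assumption
  then obtain k :: "nat \<Rightarrow> nat" where k: "\<forall>i\<in>{1..n}. 1 \<le> k i \<and> (\<forall>\<rho>\<in>Rr i.
        (\<forall>F\<in>#prem \<rho>. cls (fsym F) = CState i \<or> fsym F \<in> Sin)
      \<and> (\<forall>F\<in>#concl \<rho>. cls (fsym F) = CState i \<or> fsym F \<in> Sout)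
      \<and> (\<exists>F\<in>#concl \<rho>. cls (fsym F) = CState i)
      \<and> (\<exists>x ts. fst x = SFresh \<and> length ts = k i \<and> hd ts = Var x \<and>
           (\<forall>F\<in>#prem \<rho> + concl \<rho>. (cls (fsym F) = CState i \<or> fsym F = Setup i)
              \<longrightarrow> take (k i) (fargs F) = ts)))" by blast
  from k i \<rho> obtain F where F: "F \<in># concl \<rho>" "cls (fsym F) = CState i" by blast
  from k i \<rho> obtain x ts where x: "fst x = SFresh" "length ts = k i" "hd ts = Var x"
    and tk: "\<forall>F\<in>#prem \<rho> + concl \<rho>. (cls (fsym F) = CState i \<or> fsym F = Setup i)
              \<longrightarrow> take (k i) (fargs F) = ts" by blast
  have k1: "1 \<le> k i" using k i by blast
  have key: "fargs G \<noteq> [] \<and> hd (fargs G) = Var x" if "G \<in># concl \<rho>" "cls (fsym G) = CState i" for G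
  proof -
    have t: "take (k i) (fargs G) = ts" using tk that by auto
    hence "ts \<noteq> []" using x k1 by auto
    hence ne: "fargs G \<noteq> []" using t by auto
    have "hd (fargs G) = hd (take (k i) (fargs G))" using k1 by (simp add: hd_take)
    thus ?thesis using t x ne by simp
  qed
  have "\<exists>y. \<exists>F\<in>#concl \<rho>. cls (fsym F) = CState i \<and> fargs F \<noteq> [] \<and> hd (fargs F) = Var y"
    using key F by blast
  hence "\<exists>F\<in>#concl \<rho>. cls (fsym F) = CState i \<and> fargs F \<noteq> [] \<and> hd (fargs F) = Var (tid cls i \<rho>)"
    unfolding tid_def by (rule someI_ex)
  then obtain G where "G \<in># concl \<rho>" "cls (fsym G) = CState i" "hd (fargs G) = Var (tid cls i \<rho>)" by blast
  with key have "tid cls i \<rho> = x" by fastforce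
  thus ?thesis using x by simp
qed

lemma io_decomp:
  assumes i: "i \<in> {1..n}" and d: "d \<in> iodescs n Sin Sout Setup Renv i"
  shows "lab (io_rule ar d) = {#}"
    "prem (io_rule ar d) = prem (role_io ar d) + prem (env_io ar d)"
    "concl (io_rule ar d) = concl (role_io ar d) + concl (env_io ar d)"
proof -
  have "lab (io_rule ar d) = {#}"
  proof (cases d)
    case (IOSetup j \<rho>)
    with d have j: "j = i" and \<rho>: "\<rho> \<in> Renv" "\<exists>F\<in>#concl \<rho>. fsym F = Setup i"
      by (auto simp: iodescs_def setup_rules_def)
    have "lab \<rho> = {#}" using pf i \<rho> unfolding protocol_format_def by blast
    thus ?thesis using IOSetup by (simp add: lift_rule_def lab_def)
  qed (simp_all add: in_rule_def out_rule_def lab_def)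
  thus "lab (io_rule ar d) = {#}" .
  show "prem (io_rule ar d) = prem (role_io ar d) + prem (env_io ar d)"
    by (cases d) (simp_all add: in_rule_def out_rule_def prem_def concl_def)
  show "concl (io_rule ar d) = concl (role_io ar d) + concl (env_io ar d)"
    by (cases d) (simp_all add: in_rule_def out_rule_def prem_def concl_def)
qed

abbreviation "P \<equiv> xper per"
abbreviation "RI \<equiv> R_intf n cls Sin Sout Setup ar Renv Rr"

definition io_step where
  "io_step R d \<theta> S a S' \<longleftrightarrow> (\<exists>l' r'. (\<forall>F\<in>#l' + a + r'. ground_fact F)
        \<and> eq_ms E l' (subst_ms \<theta> (prem R))
        \<and> eq_ms E a (subst_ms \<theta> (lab R))
        \<and> eq_ms E r' (subst_ms \<theta> (concl R))
        \<and> lin_part P l' \<subseteq># S \<and> set_mset (per_part P l') \<subseteq> set_mset S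
        \<and> S' = S - lin_part P l' + r')"

lemma ground_sigma:
  assumes "ground_subst \<theta>" shows "ground (subst \<theta> (fix_tid x rid v))"
  using assms by (cases v) (auto simp: subst_fix ground_subst_def ground_def)

lemma role_step_cases:
  assumes i: "i \<in> {1..n}"
    and st: "msr_step P E (R_role_rid n cls Sin Sout Setup ar Renv Rr i rid) S a S'"
  shows "(msr_step P E RI S a S' \<and> (\<forall>s\<in>#image_mset fsym a. s \<notin> range Lam))
   \<or> (\<exists>d \<theta>. d \<in> iodescs n Sin Sout Setup Renv i \<and> (\<forall>x. ground (\<theta> x))
        \<and> io_step (role_io ar d) d \<theta> S a S')"
proof -
  from st obtain \<rho>r \<theta> l' r' where r: "\<rho>r \<in> R_role_rid n cls Sin Sout Setup ar Renv Rr i rid"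
    and gs: "ground_subst \<theta>" and gf: "\<forall>F\<in>#l' + a + r'. ground_fact F"
    and el: "eq_ms E l' (subst_ms \<theta> (prem \<rho>r))"
    and ea: "eq_ms E a (subst_ms \<theta> (lab \<rho>r))"
    and er: "eq_ms E r' (subst_ms \<theta> (concl \<rho>r))"
    and rest: "lin_part P l' \<subseteq># S" "set_mset (per_part P l') \<subseteq> set_mset S"
        "S' = S - lin_part P l' + r'"
    unfolding msr_step_def by blast
  from r obtain \<rho> x where \<rho>r: "\<rho>r = subst_rule (fix_tid x rid) \<rho>"
    and mem: "(\<rho>, x) \<in> R_role_tid n cls Sin Sout Setup ar Renv Rr i"
    unfolding R_role_rid_def by blast
  define \<sigma> where "\<sigma> = (\<lambda>v. subst \<theta> (fix_tid x rid v))"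
  have sub: "subst_ms \<theta> (prem \<rho>r) = subst_ms \<sigma> (prem \<rho>)"
    "subst_ms \<theta> (lab \<rho>r) = subst_ms \<sigma> (lab \<rho>)"
    "subst_ms \<theta> (concl \<rho>r) = subst_ms \<sigma> (concl \<rho>)"
    by (simp_all add: \<rho>r prem_subst_rule lab_subst_rule concl_subst_rule subst_ms_subst_ms \<sigma>_def)
  have gr: "\<forall>v. ground (\<sigma> v)" using gs by (simp add: \<sigma>_def ground_sigma)
  from mem show ?thesis
    unfolding R_role_tid_def
  proof (elim UnE CollectE exE conjE)
    fix \<rho>0 assume eq: "(\<rho>, x) = (Rprime n cls Sin Sout Setup i \<rho>0, tid cls i \<rho>0)" and \<rho>0: "\<rho>0 \<in> Rr i"
    have fx: "fst x = SFresh" using eq tid_fresh[OF i \<rho>0] by simp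
    have gs\<sigma>: "ground_subst \<sigma>"
      unfolding ground_subst_def
    proof (intro conjI allI)
      fix m
      show "\<sigma> (SFresh, m) \<in> range FreshN" using gs by (auto simp: \<sigma>_def subst_fix ground_subst_def)
      have "(SPub, m) \<noteq> x" using fx by auto
      thus "\<sigma> (SPub, m) \<in> range PubN" using gs by (auto simp: \<sigma>_def subst_fix ground_subst_def)
    qed (use gr in blast)
    have inRI: "\<rho> \<in> RI" using eq \<rho>0 i unfolding R_intf_def by blast
    have "msr_step P E RI S a S'"
      unfolding msr_step_def
      using inRI gs\<sigma> gf el ea er rest sub by metis
    moreover have "\<forall>s\<in>#image_mset fsym a. s \<notin> range Lam"
      using eq_ms_fsym[OF ea] sub fsym_Rprime eq by (metis fsym_subst_ms prod.inject)
    ultimately show ?thesis by blast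
  next
    fix d assume eq: "(\<rho>, x) = (role_io ar d, tid_io d)" and d: "d \<in> iodescs n Sin Sout Setup Renv i"
    have "io_step (role_io ar d) d \<sigma> S a S'"
      unfolding io_step_def using gf el ea er rest sub eq
      by (intro exI[of _ l'] exI[of _ r']) auto
    thus ?thesis using d gr by blast
  qed
qed

lemma env_step_cases:
  assumes st: "msr_step P E (R_env_e n Sin Sout Setup ar Renv) S a S'"
  shows "(msr_step P E RI S a S' \<and> (\<forall>s\<in>#image_mset fsym a. s \<notin> range Lam))
   \<or> (\<exists>i d \<theta>. i \<in> {1..n} \<and> d \<in> iodescs n Sin Sout Setup Renv i \<and> ground_subst \<theta>
        \<and> io_step (env_io ar d) d \<theta> S a S')"
proof -
  from st obtain \<rho> \<theta> l' r' where r: "\<rho> \<in> R_env_e n Sin Sout Setup ar Renv"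
    and gs: "ground_subst \<theta>" and gf: "\<forall>F\<in>#l' + a + r'. ground_fact F"
    and el: "eq_ms E l' (subst_ms \<theta> (prem \<rho>))"
    and ea: "eq_ms E a (subst_ms \<theta> (lab \<rho>))"
    and er: "eq_ms E r' (subst_ms \<theta> (concl \<rho>))"
    and rest: "lin_part P l' \<subseteq># S" "set_mset (per_part P l') \<subseteq> set_mset S"
        "S' = S - lin_part P l' + r'"
    unfolding msr_step_def by blast
  from r show ?thesis unfolding R_env_e_def
  proof (elim UnE imageE UN_E)
    fix \<rho>0 assume eq: "\<rho> = lift_rule \<rho>0" and \<rho>0: "\<rho>0 \<in> Renv_minus n Setup Renv"
    have inRI: "\<rho> \<in> RI" using eq \<rho>0 unfolding R_intf_def by blast
    have "msr_step P E RI S a S'"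
      unfolding msr_step_def using inRI gs gf el ea er rest by metis
    moreover have "\<forall>s\<in>#image_mset fsym a. s \<notin> range Lam"
      using eq_ms_fsym[OF ea] fsym_lift eq by (metis fsym_subst_ms)
    ultimately show ?thesis by blast
  next
    fix i d assume i: "i \<in> {1..n}" and d: "d \<in> iodescs n Sin Sout Setup Renv i" and eq: "\<rho> = env_io ar d"
    have "io_step (env_io ar d) d \<theta> S a S'"
      unfolding io_step_def using gf el ea er rest eq
      by (intro exI[of _ l'] exI[of _ r']) auto
    thus ?thesis using i d gs by blast
  qed
qed

lemma lab_role_lam: "lab (role_io ar d) = lam_label ar d"
  by (cases d) (simp_all add: lab_def)

lemma combine:
  assumes i: "i \<in> {1..n}" and d: "d \<in> iodescs n Sin Sout Setup Renv i"
    and gse: "ground_subst \<theta>e"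
    and rs: "io_step (role_io ar d) d \<theta>r S1 a' S1'"
    and es: "io_step (env_io ar d) d \<theta>e S2 a' S2'"
  shows "msr_step P E RI (S2 + S1) {#} (S2' + S1')"
proof -
  from rs obtain l1 r1 where gf1: "\<forall>F\<in>#l1 + a' + r1. ground_fact F"
        and el1: "eq_ms E l1 (subst_ms \<theta>r (prem (role_io ar d)))"
        and ea1: "eq_ms E a' (subst_ms \<theta>r (lab (role_io ar d)))"
        and er1: "eq_ms E r1 (subst_ms \<theta>r (concl (role_io ar d)))"
        and s1: "lin_part P l1 \<subseteq># S1" "set_mset (per_part P l1) \<subseteq> set_mset S1"
        "S1' = S1 - lin_part P l1 + r1" unfolding io_step_def by blast
  from es obtain l2 r2 where gf2: "\<forall>F\<in>#l2 + a' + r2. ground_fact F"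
        and el2: "eq_ms E l2 (subst_ms \<theta>e (prem (env_io ar d)))"
        and ea2: "eq_ms E a' (subst_ms \<theta>e (lab (env_io ar d)))"
        and er2: "eq_ms E r2 (subst_ms \<theta>e (concl (env_io ar d)))"
        and s2: "lin_part P l2 \<subseteq># S2" "set_mset (per_part P l2) \<subseteq> set_mset S2"
        "S2' = S2 - lin_part P l2 + r2" unfolding io_step_def by blast
  define ys where "ys = yvars (io_rule ar d)"
  have "eq_ms E (subst_ms \<theta>r (lab (role_io ar d))) (subst_ms \<theta>e (lab (env_io ar d)))"
    using eq_ms_trans[OF E eq_ms_sym[OF E ea1] ea2] .
  hence "eq_fact E (Fact (Lam d) (map \<theta>r ys)) (Fact (Lam d) (map \<theta>e ys))"
    by (simp add: lab_role_env[symmetric] lab_role_lam lam_label_def subst_ms_lam eq_ms_def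
        rel_mset_single ys_def)
  hence la: "list_all2 E (map \<theta>r ys) (map \<theta>e ys)" by (simp add: eq_fact_def)
  have agree: "E (\<theta>r v) (\<theta>e v)" if "v \<in> vars_rule (io_rule ar d)" for v
  proof -
    have "v \<in> set ys" using that by (simp add: ys_def yvars_set)
    then obtain j where "j < length ys" "ys ! j = v" by (auto simp: in_set_conv_nth)
    thus ?thesis using la by (auto simp: list_all2_conv_all_nth)
  qed
  note dec = io_decomp[OF i d]
  have vp: "(\<Union>F\<in>set_mset (prem (role_io ar d)). vars_fact F) \<subseteq> vars_rule (io_rule ar d)"
    by (auto simp: vars_rule_def dec)
  have vc: "(\<Union>F\<in>set_mset (concl (role_io ar d)). vars_fact F) \<subseteq> vars_rule (io_rule ar d)"
    by (auto simp: vars_rule_def dec)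
  have el1': "eq_ms E l1 (subst_ms \<theta>e (prem (role_io ar d)))"
    using eq_ms_trans[OF E el1 subst_ms_agree[OF E]] agree vp by blast
  have er1': "eq_ms E r1 (subst_ms \<theta>e (concl (role_io ar d)))"
    using eq_ms_trans[OF E er1 subst_ms_agree[OF E]] agree vc by blast
  have L: "eq_ms E (l1 + l2) (subst_ms \<theta>e (prem (io_rule ar d)))"
    using rel_mset_add[OF el1'[unfolded eq_ms_def] el2[unfolded eq_ms_def]]
    by (simp add: eq_ms_def dec subst_ms_def)
  have R: "eq_ms E (r1 + r2) (subst_ms \<theta>e (concl (io_rule ar d)))"
    using rel_mset_add[OF er1'[unfolded eq_ms_def] er2[unfolded eq_ms_def]]
    by (simp add: eq_ms_def dec subst_ms_def)
  have A: "eq_ms E {#} (subst_ms \<theta>e (lab (io_rule ar d)))"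
    by (simp add: dec subst_ms_def eq_ms_def)
  have inRI: "io_rule ar d \<in> RI" using i d unfolding R_intf_def R_io_def by blast
  have gf: "\<forall>F\<in>#(l1 + l2) + {#} + (r1 + r2). ground_fact F" using gf1 gf2 by auto
  have lin: "lin_part P (l1 + l2) = lin_part P l1 + lin_part P l2" by (simp add: lin_part_def)
  have per: "per_part P (l1 + l2) = per_part P l1 + per_part P l2" by (simp add: per_part_def)
  obtain A1 where A1: "S1 = lin_part P l1 + A1" using s1(1) by (metis subset_mset.le_iff_add)
  obtain A2 where A2: "S2 = lin_part P l2 + A2" using s2(1) by (metis subset_mset.le_iff_add)
  have sub: "lin_part P (l1 + l2) \<subseteq># S2 + S1" using A1 A2 lin by simp
  have ps: "set_mset (per_part P (l1 + l2)) \<subseteq> set_mset (S2 + S1)" using s1(2) s2(2) per by auto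
  have st: "S2' + S1' = S2 + S1 - lin_part P (l1 + l2) + (r1 + r2)"
    using s1(3) s2(3) A1 A2 lin by (simp add: algebra_simps)
  show ?thesis unfolding msr_step_def
    using inRI gse gf L A R sub ps st by blast
qed

abbreviation "X1 \<equiv> interleave ({1..n} \<times> UNIV)
   (\<lambda>(i, rid). msr_lts P E (R_role_rid n cls Sin Sout Setup ar Renv Rr i rid))"
abbreviation "X2 \<equiv> msr_lts P E (R_env_e n Sin Sout Setup ar Renv)"
abbreviation "LL \<equiv> Lambda n Sin Sout Setup ar Renv"

lemma in_Lambda_role:
  assumes "i \<in> {1..n}" "d \<in> iodescs n Sin Sout Setup Renv i" "\<forall>x. ground (\<theta> x)"
  shows "subst_ms \<theta> (lab (role_io ar d)) \<in> LL"
  using assms unfolding Lambda_def R_io_role_def by blast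

lemma Lambda_fsym: "b \<in> LL \<Longrightarrow> \<exists>d. image_mset fsym b = {#Lam d#}"
  unfolding Lambda_def R_io_role_def by (auto simp: fsym_role_io)

lemma io_step_fsym: "io_step R d \<theta> S a S' \<Longrightarrow> image_mset fsym a = image_mset fsym (lab R)"
  unfolding io_step_def by (auto dest: eq_ms_fsym)

lemma role_move:
  "lts_step X1 f a f' \<Longrightarrow> \<exists>i rid S'. i \<in> {1..n} \<and> f' = f((i, rid) := S')
     \<and> msr_step P E (R_role_rid n cls Sin Sout Setup ar Renv Rr i rid) (f (i, rid)) a S'"
  by (auto simp: interleave_def msr_lts_def) blast

lemma sum_decomp:
  fixes f :: "'k \<Rightarrow> 'a multiset"
  assumes D: "finite D" "\<forall>j. j \<notin> D \<longrightarrow> f j = {#}"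
  shows "sum f D = f k + sum f (insert k D - {k})"
    "sum (f(k := T)) (insert k D) = T + sum f (insert k D - {k})"
    "\<forall>j. j \<notin> insert k D \<longrightarrow> (f(k := T)) j = {#}" "finite (insert k D)"
proof -
  have "sum f D = sum f (insert k D)"
    by (rule sum.mono_neutral_left) (use D in auto)
  thus "sum f D = f k + sum f (insert k D - {k})" using D by (simp add: sum.insert_remove)
  have "sum (f(k := T)) (insert k D - {k}) = sum f (insert k D - {k})"
    by (rule sum.cong) auto
  thus "sum (f(k := T)) (insert k D) = T + sum f (insert k D - {k})"
    using D by (simp add: sum.insert_remove)
  show "\<forall>j. j \<notin> insert k D \<longrightarrow> (f(k := T)) j = {#}" using D by auto
  show "finite (insert k D)" using D by simp
qed

lemma sim_step:
  assumes step: "lts_step (sync (eq_ms E) LL X1 X2) (f, S2) a (f', S2')"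
    and D: "finite D" "\<forall>k. k \<notin> D \<longrightarrow> f k = {#}"
  shows "\<exists>D'. finite D' \<and> (\<forall>k. k \<notin> D' \<longrightarrow> f' k = {#}) \<and> msr_step P E RI (S2 + sum f D) a (S2' + sum f' D')"
proof -
  have "(a = {#} \<and> (\<exists>a'. (\<exists>b\<in>LL. eq_ms E a' b) \<and> lts_step X1 f a' f' \<and> lts_step X2 S2 a' S2'))
      \<or> (\<not> (\<exists>b\<in>LL. eq_ms E a b) \<and> lts_step X1 f a f' \<and> S2' = S2)
      \<or> (\<not> (\<exists>b\<in>LL. eq_ms E a b) \<and> lts_step X2 S2 a S2' \<and> f' = f)"
    using step by (simp add: sync_def)
  then show ?thesis
  proof (elim disjE conjE exE bexE)
    fix a' b assume a: "a = {#}" and b: "b \<in> LL" "eq_ms E a' b"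
      and m1: "lts_step X1 f a' f'" and m2: "lts_step X2 S2 a' S2'"
    from role_move[OF m1] obtain i rid S1' where i: "i \<in> {1..n}" and f': "f' = f((i, rid) := S1')"
      and rs: "msr_step P E (R_role_rid n cls Sin Sout Setup ar Renv Rr i rid) (f (i, rid)) a' S1'" by blast
    from m2 have es: "msr_step P E (R_env_e n Sin Sout Setup ar Renv) S2 a' S2'" by (simp add: msr_lts_def)
    obtain db where db: "image_mset fsym a' = {#Lam db#}"
      using Lambda_fsym[OF b(1)] eq_ms_fsym[OF b(2)] by metis
    have nlf: "\<not> (\<forall>s\<in>#image_mset fsym a'. s \<notin> range Lam)" using db by simp
    from role_step_cases[OF i rs] obtain d1 \<theta>r where d1: "d1 \<in> iodescs n Sin Sout Setup Renv i"
      and rio: "io_step (role_io ar d1) d1 \<theta>r (f (i, rid)) a' S1'"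
      using nlf by blast
    from env_step_cases[OF es] obtain i2 d2 \<theta>e where i2: "i2 \<in> {1..n}"
      and d2: "d2 \<in> iodescs n Sin Sout Setup Renv i2" and gse: "ground_subst \<theta>e"
      and eio: "io_step (env_io ar d2) d2 \<theta>e S2 a' S2'"
      using nlf by blast
    have "{#Lam d1#} = {#Lam d2#}" using io_step_fsym[OF rio] io_step_fsym[OF eio]
      fsym_role_io[of ar d1] fsym_env_io[of ar d2] by simp
    hence "d1 = d2" by simp
    hence rio': "io_step (role_io ar d2) d2 \<theta>r (f (i, rid)) a' S1'" using rio by simp
    have c: "msr_step P E RI (S2 + f (i, rid)) {#} (S2' + S1')"
      using combine[OF i2 d2 gse rio' eio] .
    note sd = sum_decomp(1,4)[OF D, where k="(i, rid)"] sum_decomp(2,3)[OF D, where k="(i, rid)" and T=S1']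
    show ?thesis
      using msr_step_add[OF c, of "sum f (insert (i, rid) D - {(i, rid)})"] sd a f'
      by (intro exI[of _ "insert (i, rid) D"]) (simp add: add.assoc)
  next
    assume nl: "\<not> (\<exists>b\<in>LL. eq_ms E a b)" and m1: "lts_step X1 f a f'" and s2: "S2' = S2"
    from role_move[OF m1] obtain i rid S1' where i: "i \<in> {1..n}" and f': "f' = f((i, rid) := S1')"
      and rs: "msr_step P E (R_role_rid n cls Sin Sout Setup ar Renv Rr i rid) (f (i, rid)) a S1'" by blast
    have c: "msr_step P E RI (f (i, rid)) a S1'"
    proof -
      { fix d \<theta> assume d: "d \<in> iodescs n Sin Sout Setup Renv i" and g: "\<forall>x. ground (\<theta> x)"
          and io: "io_step (role_io ar d) d \<theta> (f (i, rid)) a S1'"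
        from io have "eq_ms E a (subst_ms \<theta> (lab (role_io ar d)))" unfolding io_step_def by blast
        hence False using nl in_Lambda_role[OF i d g] by blast }
      thus ?thesis using role_step_cases[OF i rs] by blast
    qed
    note sd = sum_decomp(1,4)[OF D, where k="(i, rid)"] sum_decomp(2,3)[OF D, where k="(i, rid)" and T=S1']
    show ?thesis
      using msr_step_add[OF c, of "S2 + sum f (insert (i, rid) D - {(i, rid)})"] sd s2 f'
      by (intro exI[of _ "insert (i, rid) D"]) (simp add: algebra_simps)
  next
    assume nl: "\<not> (\<exists>b\<in>LL. eq_ms E a b)" and m2: "lts_step X2 S2 a S2'" and f': "f' = f"
    from m2 have es: "msr_step P E (R_env_e n Sin Sout Setup ar Renv) S2 a S2'" by (simp add: msr_lts_def)
    have c: "msr_step P E RI S2 a S2'"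
    proof -
      { fix i d \<theta> assume "i \<in> {1..n}" "d \<in> iodescs n Sin Sout Setup Renv i" "ground_subst \<theta>"
          "io_step (env_io ar d) d \<theta> S2 a S2'"
        hence False
        proof -
          assume a1: "i \<in> {1..n}" "d \<in> iodescs n Sin Sout Setup Renv i" "ground_subst \<theta>"
            "io_step (env_io ar d) d \<theta> S2 a S2'"
          from a1(4) have "eq_ms E a (subst_ms \<theta> (lab (role_io ar d)))"
            unfolding io_step_def lab_role_env by blast
          moreover have "\<forall>x. ground (\<theta> x)" using a1(3) unfolding ground_subst_def by blast
          ultimately show False using nl in_Lambda_role[OF a1(1,2)] by blast
        qed }
      thus ?thesis using env_step_cases[OF es] by blast
    qed
    show ?thesis
      using msr_step_add[OF c, of "sum f D"] D f' by (intro exI[of _ D]) simp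
  qed
qed

lemma main:
  "Tr (sync (eq_ms E) LL X1 X2) \<subseteq> Tr (msr_lts P E RI)"
proof
  fix tr assume "tr \<in> Tr (sync (eq_ms E) LL X1 X2)"
  then obtain s where "reach (sync (eq_ms E) LL X1 X2) tr s" unfolding Tr_def by blast
  hence "\<exists>D. finite D \<and> (\<forall>k. k \<notin> D \<longrightarrow> fst s k = {#}) \<and> reach (msr_lts P E RI) tr (snd s + sum (fst s) D)"
  proof (induction rule: reach.induct)
    case reach_init
    have "reach (msr_lts P E RI) [] {#}" using reach.reach_init[of "msr_lts P E RI"]
      by (simp add: msr_lts_def)
    thus ?case by (intro exI[of _ "{}"]) (simp add: sync_def interleave_def msr_lts_def)
  next
    case (reach_step tr S a S')
    then obtain D where D: "finite D" "\<forall>k. k \<notin> D \<longrightarrow> fst S k = {#}"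
      and r: "reach (msr_lts P E RI) tr (snd S + sum (fst S) D)" by blast
    obtain f S2 f' S2' where SS: "S = (f, S2)" "S' = (f', S2')" by (cases S, cases S') auto
    from sim_step[of f S2 a f' S2' D] reach_step(2) D SS obtain D' where
      "finite D'" "\<forall>k. k \<notin> D' \<longrightarrow> f' k = {#}" "msr_step P E RI (S2 + sum f D) a (S2' + sum f' D')" by auto
    moreover have "reach (msr_lts P E RI) (tr @ [a]) (S2' + sum f' D')"
      using reach.reach_step[OF r[unfolded SS fst_conv snd_conv]] calculation(3)
      by (simp add: msr_lts_def)
    ultimately show ?case using SS by auto
  qed
  thus "tr \<in> Tr (msr_lts P E RI)" unfolding Tr_def by blast
qed

end

theorem lemma2:
  fixes n :: nat
    and per :: "'s \<Rightarrow> bool"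
    and cls :: "'s \<Rightarrow> symclass"
    and Sin Sout :: "'s set"
    and K Fr In Out :: 's
    and Setup :: "nat \<Rightarrow> 's"
    and ar :: "'s \<Rightarrow> nat"
    and Renv :: "('s,'f,'n) rule set"
    and Rr :: "nat \<Rightarrow> ('s,'f,'n) rule set"
    and E :: "('f,'n) trm \<Rightarrow> ('f,'n) trm \<Rightarrow> bool"
  assumes "finite (UNIV :: 'f set)"
    and "equational_theory E"
    and "protocol_format n per cls Sin Sout K Fr In Out Setup ar Renv Rr"
  shows "Tr (sync (eq_ms E) (Lambda n Sin Sout Setup ar Renv)
             (interleave ({1..n} \<times> UNIV)
                (\<lambda>(i, rid). msr_lts (xper per) E (R_role_rid n cls Sin Sout Setup ar Renv Rr i rid)))
             (msr_lts (xper per) E (R_env_e n Sin Sout Setup ar Renv)))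
         \<subseteq> Tr (msr_lts (xper per) E (R_intf n cls Sin Sout Setup ar Renv Rr))"
  using main[OF assms(2,3)] by simp
end
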